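(* Let $t>0$, $\delta\in D$, $x,y\ge0$, and define $$F^t_{\delta}(\lambda)=\exp\left\{-\frac{\lambda x}{1+2\lambda t}\right\}\exp\left\{-\int_{0}^t \frac{\lambda \delta_{u}}{1+2\lambda (t-u)}du\right\},\qquad b_{\delta,x,y}^t(n):=\frac{\frac{(x/(2t))^n}{n!}\mathcal{L}^{-1}F^t_{\delta+2n}(y)}{\sum_{k=0}^\infty\frac{(x/(2t))^k}{k!}\mathcal{L}^{-1}F^t_{\delta+2k}(y)}.$$ Let $U$ be a Poisson random variable with parameter $x/(2t)$, let $X_1,X_2,\dots$ be i.i.d. exponential random variables with rate $1/(2t)$ (Laplace transform $1/(1+2t\lambda)$), and let $X_*$ be a random variable with Laplace transform $F^t_\delta$, all independent. Then $(b_{\delta,x,y}^t(n))_{n\ge0}$ is the conditional distribution of $U$ given $X_*+X_1+\dots+X_U=y$.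
   Context: $D$ denotes the space of piecewise continuous, measurable, locally bounded functions $\mathbb{R}^+\to\mathbb{R}^+$. $\mathcal{L}^{-1}F(y)$ denotes the inverse Laplace transform of $F$ evaluated at $y$ (the density at $y$ of the distribution whose Laplace transform is $F$). *)

theory Defs
  imports "HOL-Probability.Probability"
begin

text \<open>The class D: piecewise continuous, measurable, locally bounded functions
  from [0,oo) to [0,oo). Piecewise continuity is read as: on every compact interval
  [0,a] the function is continuous off a finite set of points.\<close>
definition in_D :: "(real \<Rightarrow> real) \<Rightarrow> bool" where
  "in_D d \<longleftrightarrow> d \<in> borel_measurable borel
     \<and> (\<forall>u\<ge>0. d u \<ge> 0)
     \<and> (\<forall>a\<ge>0. bounded (d ` {0..a}))
     \<and> (\<forall>a\<ge>0. \<exists>S. finite S \<and> continuous_on ({0..a} - S) d)"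

definition Fdelta :: "real \<Rightarrow> real \<Rightarrow> (real \<Rightarrow> real) \<Rightarrow> real \<Rightarrow> real" where
  "Fdelta t x d lam =
     exp (- (lam * x / (1 + 2 * lam * t))) *
     exp (- integral {0..t} (\<lambda>u. lam * d u / (1 + 2 * lam * (t - u))))"

text \<open>g is a density (on [0,oo)) of a probability distribution whose Laplace transform is F,
  i.e. g is (a version of) the inverse Laplace transform of F.\<close>
definition is_inv_laplace :: "(real \<Rightarrow> real) \<Rightarrow> (real \<Rightarrow> real) \<Rightarrow> bool" where
  "is_inv_laplace F g \<longleftrightarrow> g \<in> borel_measurable lborel
     \<and> (\<forall>s. g s \<ge> 0) \<and> (\<forall>s<0. g s = 0)
     \<and> prob_space (density lborel g)
     \<and> (\<forall>lam\<ge>0. (\<integral>s. exp (- lam * s) \<partial>(density lborel g)) = F lam)"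

text \<open>b^t_{delta,x,y}(n), given the inverse Laplace transforms f k of F^t_{delta+2k}.\<close>
definition bcoef :: "real \<Rightarrow> real \<Rightarrow> (nat \<Rightarrow> real \<Rightarrow> real) \<Rightarrow> real \<Rightarrow> nat \<Rightarrow> real" where
  "bcoef t x f y n =
     ((x / (2 * t)) ^ n / fact n * f n y) /
     (\<Sum>k. (x / (2 * t)) ^ k / fact k * f k y)"

end

theory Submission
  imports Defs
begin


lemma int_bnd:
  fixes M :: "real measure" and C :: real
  assumes P: "prob_space M" and S: "sets M = sets borel" and nn: "AE s in M. 0 \<le> s"
    and h: "h \<in> borel_measurable borel" and C: "\<And>u. 0 \<le> u \<Longrightarrow> u \<le> 1 \<Longrightarrow> \<bar>h u\<bar> \<le> C"
  shows "integrable M (\<lambda>s. h (exp (- s)))"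
proof -
  interpret prob_space M by fact
  show ?thesis
  proof (rule integrable_const_bound[where B=C])
    show "AE s in M. norm (h (exp (- s))) \<le> C"
      using nn by eventually_elim (auto intro!: C)
    show "(\<lambda>s. h (exp (- s))) \<in> borel_measurable M"
      using h by (simp add: measurable_cong_sets[OF S refl])
  qed
qed

lemma mom_eq:
  fixes M1 M2 :: "real measure"
  assumes P1: "prob_space M1" and S1: "sets M1 = sets borel" and nn1: "AE s in M1. 0 \<le> s"
    and P2: "prob_space M2" and S2: "sets M2 = sets borel" and nn2: "AE s in M2. 0 \<le> s"
    and L: "\<And>n::nat. (\<integral>s. exp (- real n * s) \<partial>M1) = (\<integral>s. exp (- real n * s) \<partial>M2)"
  shows "(\<integral>s. exp (- s) ^ k * (1 - exp (- s)) ^ m \<partial>M1) = (\<integral>s. exp (- s) ^ k * (1 - exp (- s)) ^ m \<partial>M2)"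
proof (induction m arbitrary: k)
  case 0
  have e: "exp (- s) ^ k = exp (- real k * s)" for s
    by (simp add: exp_of_nat_mult[symmetric])
  show ?case using L[of k] by (simp add: e)
next
  case (Suc m)
  have id: "exp (- s) ^ k * (1 - exp (- s)) ^ Suc m
       = exp (- s) ^ k * (1 - exp (- s)) ^ m - exp (- s) ^ Suc k * (1 - exp (- s)) ^ m" for s :: real
    by (simp add: algebra_simps)
  have b: "\<And>u::real. 0 \<le> u \<Longrightarrow> u \<le> 1 \<Longrightarrow> \<bar>u ^ j * (1 - u) ^ m\<bar> \<le> 1" for j
    by (simp add: abs_mult, rule mult_le_one, auto intro!: power_le_one)
  have i1: "integrable M1 (\<lambda>s. exp (- s) ^ j * (1 - exp (- s)) ^ m)" for j
    using int_bnd[OF P1 S1 nn1, of "\<lambda>u. u ^ j * (1 - u) ^ m" 1] b by auto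
  have i2: "integrable M2 (\<lambda>s. exp (- s) ^ j * (1 - exp (- s)) ^ m)" for j
    using int_bnd[OF P2 S2 nn2, of "\<lambda>u. u ^ j * (1 - u) ^ m" 1] b by auto
  show ?case
    unfolding id
    by (subst Bochner_Integration.integral_diff[OF i1 i1], subst Bochner_Integration.integral_diff[OF i2 i2])
       (simp only: Suc.IH[of k] Suc.IH[of "Suc k"])
qed

lemma cont_eq:
  fixes M1 M2 :: "real measure" and g :: "real \<Rightarrow> real"
  assumes P1: "prob_space M1" and S1: "sets M1 = sets borel" and nn1: "AE s in M1. 0 \<le> s"
    and P2: "prob_space M2" and S2: "sets M2 = sets borel" and nn2: "AE s in M2. 0 \<le> s"
    and L: "\<And>n::nat. (\<integral>s. exp (- real n * s) \<partial>M1) = (\<integral>s. exp (- real n * s) \<partial>M2)"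
    and g: "continuous_on UNIV g"
  shows "(\<integral>s. g (exp (- s)) \<partial>M1) = (\<integral>s. g (exp (- s)) \<partial>M2)"
proof -
  have gm: "g \<in> borel_measurable borel"
    using g by (rule borel_measurable_continuous_onI)
  have "bounded (g ` {0..1})"
    by (rule compact_imp_bounded[OF compact_continuous_image[OF continuous_on_subset[OF g subset_UNIV] compact_Icc]])
  then obtain C where C0: "\<forall>y\<in>g ` {0..1}. norm y \<le> C"
    unfolding bounded_iff by blast
  have C: "\<And>u. 0 \<le> u \<Longrightarrow> u \<le> 1 \<Longrightarrow> \<bar>g u\<bar> \<le> C"
    using C0 by simp
  define B where "B n u = (\<Sum>k\<le>n. g (real k / real n) * Bernstein n k u)" for n u
  have Bm: "B n \<in> borel_measurable borel" for n
    unfolding B_def Bernstein_def by measurable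
  have BB: "\<bar>B n u\<bar> \<le> C" if u: "0 \<le> u" "u \<le> 1" for n u
  proof -
    have "\<bar>B n u\<bar> \<le> (\<Sum>k\<le>n. \<bar>g (real k / real n)\<bar> * Bernstein n k u)"
      unfolding B_def by (rule order.trans[OF sum_abs]) (simp add: abs_mult Bernstein_nonneg u)
    also have "\<dots> \<le> (\<Sum>k\<le>n. C * Bernstein n k u)"
    proof (rule sum_mono)
      fix k assume k: "k \<in> {..n}"
      have "0 \<le> real k / real n" by simp
      moreover have "real k / real n \<le> 1"
        using k by (cases "n = 0") (auto simp: divide_le_eq_1)
      ultimately show "\<bar>g (real k / real n)\<bar> * Bernstein n k u \<le> C * Bernstein n k u"
        by (intro mult_right_mono C Bernstein_nonneg u)
    qed
    also have "\<dots> = C" by (simp add: sum_distrib_left[symmetric])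
    finally show ?thesis .
  qed
  have Bint: "(\<integral>s. B n (exp (- s)) \<partial>M1) = (\<integral>s. B n (exp (- s)) \<partial>M2)" for n
  proof -
    have b: "\<And>u::real. 0 \<le> u \<Longrightarrow> u \<le> 1 \<Longrightarrow> \<bar>u ^ j * (1 - u) ^ m\<bar> \<le> 1" for j m
      by (simp add: abs_mult, rule mult_le_one, auto intro!: power_le_one)
    have i1: "integrable M1 (\<lambda>s. exp (- s) ^ j * (1 - exp (- s)) ^ m)" for j m
      using int_bnd[OF P1 S1 nn1, of "\<lambda>u. u ^ j * (1 - u) ^ m" 1] b by auto
    have i2: "integrable M2 (\<lambda>s. exp (- s) ^ j * (1 - exp (- s)) ^ m)" for j m
      using int_bnd[OF P2 S2 nn2, of "\<lambda>u. u ^ j * (1 - u) ^ m" 1] b by auto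
    have e: "B n (exp (- s)) = (\<Sum>k\<le>n. (g (real k / real n) * real (n choose k)) * (exp (- s) ^ k * (1 - exp (- s)) ^ (n - k)))" for s
      unfolding B_def Bernstein_def by (simp add: mult_ac)
    show ?thesis
      unfolding e
      apply (subst Bochner_Integration.integral_sum, simp add: i1)
      apply (subst Bochner_Integration.integral_sum, simp add: i2)
      apply (simp only: integral_mult_right_zero mom_eq[OF P1 S1 nn1 P2 S2 nn2 L])
      done
  qed
  have key: "\<bar>(\<integral>s. g (exp (- s)) \<partial>M1) - (\<integral>s. g (exp (- s)) \<partial>M2)\<bar> \<le> 2 * e" if e: "e > 0" for e
  proof -
    obtain N where N0: "\<forall>n x. N \<le> n \<and> x \<in> {0..1}
                    \<longrightarrow> \<bar>g x - (\<Sum>k\<le>n. g(k/n) * Bernstein n k x)\<bar> < e"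
      using Bernstein_Weierstrass[OF continuous_on_subset[OF g subset_UNIV] e] by blast
    have N: "\<And>n x. N \<le> n \<Longrightarrow> x \<in> {0..1} \<Longrightarrow> \<bar>g x - B n x\<bar> < e"
      using N0 unfolding B_def by blast
    have est: "\<bar>(\<integral>s. g (exp (- s)) \<partial>M) - (\<integral>s. B N (exp (- s)) \<partial>M)\<bar> \<le> e"
      if P: "prob_space M" and S: "sets M = sets borel" and nn: "AE s in M. 0 \<le> s" for M
    proof -
      interpret prob_space M by fact
      have ig: "integrable M (\<lambda>s. g (exp (- s)))" using int_bnd[OF P S nn gm C] .
      have iB: "integrable M (\<lambda>s. B N (exp (- s)))"
        using int_bnd[OF P S nn Bm BB] .
      have "\<bar>(\<integral>s. g (exp (- s)) \<partial>M) - (\<integral>s. B N (exp (- s)) \<partial>M)\<bar>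
          = \<bar>\<integral>s. g (exp (- s)) - B N (exp (- s)) \<partial>M\<bar>"
        using ig iB by simp
      also have "\<dots> \<le> (\<integral>s. \<bar>g (exp (- s)) - B N (exp (- s))\<bar> \<partial>M)"
        by (rule integral_abs_bound)
      also have "\<dots> \<le> (\<integral>s. e \<partial>M)"
        by (rule integral_mono_AE) (use ig iB nn N in \<open>auto intro!: less_imp_le\<close>)
      also have "\<dots> = e" by (simp add: prob_space)
      finally show ?thesis .
    qed
    show ?thesis
      using est[OF P1 S1 nn1] est[OF P2 S2 nn2] Bint[of N] by linarith
  qed
  show ?thesis
  proof (rule ccontr)
    assume ne: "\<not> ?thesis"
    let ?d = "\<bar>(\<integral>s. g (exp (- s)) \<partial>M1) - (\<integral>s. g (exp (- s)) \<partial>M2)\<bar>"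
    have "?d > 0" using ne by simp
    with key[of "?d / 4"] show False by simp
  qed
qed



lemma iexp_split: "exp (\<i> * complex_of_real a) = complex_of_real (cos a) + \<i> * complex_of_real (sin a)"
  by (simp add: exp_Euler cos_of_real sin_of_real)

lemma laplace_unique:
  fixes M1 M2 :: "real measure"
  assumes P1: "prob_space M1" and S1: "sets M1 = sets borel" and nn1: "AE s in M1. 0 \<le> s"
    and P2: "prob_space M2" and S2: "sets M2 = sets borel" and nn2: "AE s in M2. 0 \<le> s"
    and L: "\<And>n::nat. (\<integral>s. exp (- real n * s) \<partial>M1) = (\<integral>s. exp (- real n * s) \<partial>M2)"
  shows "M1 = M2"
proof -
  define E :: "real \<Rightarrow> real" where "E s = exp (- s)" for s
  have Em: "E \<in> borel_measurable borel" unfolding E_def by measurable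
  have rd: "real_distribution (distr M borel E)" if P: "prob_space M" and S: "sets M = sets borel" for M
  proof -
    interpret prob_space M by fact
    show ?thesis
      unfolding real_distribution_def real_distribution_axioms_def
      by (simp add: prob_space_distr measurable_cong_sets[OF S refl] Em)
  qed
  have ch: "char (distr M borel E) \<theta> = complex_of_real (\<integral>s. cos (\<theta> * exp (- s)) \<partial>M)
            + \<i> * complex_of_real (\<integral>s. sin (\<theta> * exp (- s)) \<partial>M)"
    if P: "prob_space M" and S: "sets M = sets borel" and nn: "AE s in M. 0 \<le> s" for M \<theta>
  proof -
    have Em': "E \<in> borel_measurable M" using Em by (simp add: measurable_cong_sets[OF S refl])
    have ic: "integrable M (\<lambda>s. cos (\<theta> * exp (- s)))"
      using int_bnd[OF P S nn, of "\<lambda>u. cos (\<theta> * u)" 1] by auto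
    have isn: "integrable M (\<lambda>s. sin (\<theta> * exp (- s)))"
      using int_bnd[OF P S nn, of "\<lambda>u. sin (\<theta> * u)" 1] by auto
    have "char (distr M borel E) \<theta> = (CLINT s|M. iexp (\<theta> * E s))"
      unfolding char_def by (simp add: integral_distr Em')
    also have "\<dots> = (CLINT s|M. complex_of_real (cos (\<theta> * exp (- s))) + \<i> * complex_of_real (sin (\<theta> * exp (- s))))"
      by (rule Bochner_Integration.integral_cong[OF refl]) (simp only: E_def iexp_split)
    also have "\<dots> = complex_of_real (\<integral>s. cos (\<theta> * exp (- s)) \<partial>M)
            + \<i> * complex_of_real (\<integral>s. sin (\<theta> * exp (- s)) \<partial>M)"
      by (subst Bochner_Integration.integral_add)
         (auto intro!: integrable_mult_right simp: ic isn)
    finally show ?thesis .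
  qed
  have cg: "continuous_on UNIV (\<lambda>u::real. cos (\<theta> * u))" "continuous_on UNIV (\<lambda>u::real. sin (\<theta> * u))" for \<theta>
    by (intro continuous_intros)+
  have "char (distr M1 borel E) = char (distr M2 borel E)"
  proof
    fix \<theta>
    show "char (distr M1 borel E) \<theta> = char (distr M2 borel E) \<theta>"
      unfolding ch[OF P1 S1 nn1] ch[OF P2 S2 nn2]
      using cont_eq[OF P1 S1 nn1 P2 S2 nn2 L cg(1)] cont_eq[OF P1 S1 nn1 P2 S2 nn2 L cg(2)]
      by simp
  qed
  then have D: "distr M1 borel E = distr M2 borel E"
    by (rule Levy_uniqueness[OF rd[OF P1 S1] rd[OF P2 S2]])
  have lnm: "(\<lambda>u::real. - ln u) \<in> borel_measurable borel" by measurable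
  have bk: "distr (distr M borel E) borel (\<lambda>u. - ln u) = M" if S: "sets M = sets borel" for M
  proof -
    have "distr (distr M borel E) borel (\<lambda>u. - ln u) = distr M borel ((\<lambda>u. - ln u) \<circ> E)"
      by (rule distr_distr[OF lnm]) (simp add: measurable_cong_sets[OF S refl] Em)
    also have "(\<lambda>u. - ln u) \<circ> E = (\<lambda>x. x)" by (auto simp: E_def)
    also have "distr M borel (\<lambda>x. x) = M" by (rule distr_id2) (simp add: S)
    finally show ?thesis .
  qed
  show ?thesis
    using bk[OF S1] bk[OF S2] D by metis
qed


lemma h2_int:
  fixes t lam :: real and k :: nat
  assumes t: "t > 0" and lam: "lam \<ge> 0"
  shows "((\<lambda>u. lam * (2 * real k) / (1 + 2 * lam * (t - u))) has_integral (real k * ln (1 + 2 * lam * t))) {0..t}"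
proof -
  define F where "F u = - (real k * ln (1 + 2 * lam * (t - u)))" for u
  have pos: "1 + 2 * lam * (t - u) > 0" if "u \<in> {0..t}" for u
    using that lam by (auto intro: add_pos_nonneg)
  have "((\<lambda>u. lam * (2 * real k) / (1 + 2 * lam * (t - u))) has_integral (F t - F 0)) {0..t}"
  proof (rule fundamental_theorem_of_calculus)
    show "0 \<le> t" using t by simp
    fix u assume u: "u \<in> {0..t}"
    have "(F has_real_derivative (lam * (2 * real k) / (1 + 2 * lam * (t - u)))) (at u within {0..t})"
      using pos[OF u] unfolding F_def
      by (auto intro!: derivative_eq_intros simp: field_simps)
    then show "(F has_vector_derivative lam * (2 * real k) / (1 + 2 * lam * (t - u))) (at u within {0..t})"
      by (simp add: has_real_derivative_iff_has_vector_derivative)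
  qed
  also have "F t - F 0 = real k * ln (1 + 2 * lam * t)" by (simp add: F_def)
  finally show ?thesis .
qed

lemma h1_int:
  fixes t lam :: real
  assumes t: "t > 0" and lam: "lam \<ge> 0" and d: "in_D d"
  shows "(\<lambda>u. lam * d u / (1 + 2 * lam * (t - u))) integrable_on {0..t}"
proof -
  have dm: "d \<in> borel_measurable borel" and db: "bounded (d ` {0..t})"
    using d t unfolding in_D_def by auto
  then obtain K where K0: "\<forall>y\<in>d ` {0..t}. norm y \<le> K"
    unfolding bounded_iff by blast
  have K: "\<And>u. u \<in> {0..t} \<Longrightarrow> \<bar>d u\<bar> \<le> K" using K0 by simp
  have si: "set_integrable lborel {0..t} (\<lambda>u. lam * K)"
    unfolding set_integrable_def
    by (rule borel_integrable_compact) (auto intro: continuous_intros)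
  have "set_integrable lborel {0..t} (\<lambda>u. lam * d u / (1 + 2 * lam * (t - u)))"
  proof (rule set_integrable_bound[OF si])
    show "set_borel_measurable lborel {0..t} (\<lambda>u. lam * d u / (1 + 2 * lam * (t - u)))"
      unfolding set_borel_measurable_def using dm by measurable
    show "AE x in lborel. x \<in> {0..t} \<longrightarrow> norm (lam * d x / (1 + 2 * lam * (t - x))) \<le> norm (lam * K)"
    proof (rule AE_I2, rule impI)
      fix u assume u: "u \<in> {0..t}"
      have p: "1 \<le> 1 + 2 * lam * (t - u)" using u lam by auto
      have q: "\<bar>lam * d u\<bar> \<le> \<bar>lam * d u\<bar> * (1 + 2 * lam * (t - u))"
        using mult_left_mono[OF p, of "\<bar>lam * d u\<bar>"] by simp
      have "\<bar>lam * d u / (1 + 2 * lam * (t - u))\<bar> \<le> \<bar>lam * d u\<bar>"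
        using p q by (simp add: abs_divide divide_le_eq)
      also have "\<dots> \<le> lam * K" using K[OF u] lam by (simp add: abs_mult mult_left_mono)
      also have "\<dots> \<le> \<bar>lam * K\<bar>" by simp
      finally show "norm (lam * d u / (1 + 2 * lam * (t - u))) \<le> norm (lam * K)" by simp
    qed
  qed
  then show ?thesis by (rule set_borel_integral_eq_integral(1))
qed

lemma Fdelta_shift:
  assumes t: "t > 0" and lam: "lam \<ge> 0" and d: "in_D d"
  shows "Fdelta t x (\<lambda>u. d u + 2 * real k) lam = Fdelta t x d lam * (1 / (1 + 2 * lam * t)) ^ k"
proof -
  have pos: "1 + 2 * lam * t > 0" using t lam by (auto intro: add_pos_nonneg)
  have e: "(\<lambda>u. lam * (d u + 2 * real k) / (1 + 2 * lam * (t - u)))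
      = (\<lambda>u. lam * d u / (1 + 2 * lam * (t - u)) + lam * (2 * real k) / (1 + 2 * lam * (t - u)))"
    by (auto simp: add_divide_distrib distrib_left)
  have I: "integral {0..t} (\<lambda>u. lam * (d u + 2 * real k) / (1 + 2 * lam * (t - u)))
     = integral {0..t} (\<lambda>u. lam * d u / (1 + 2 * lam * (t - u))) + real k * ln (1 + 2 * lam * t)"
    unfolding e
    by (subst integral_add[OF h1_int[OF t lam d] has_integral_integrable[OF h2_int[OF t lam]]])
       (simp add: integral_unique[OF h2_int[OF t lam]])
  have ex: "exp (- (real k * ln (1 + 2 * lam * t))) = (1 / (1 + 2 * lam * t)) ^ k"
    using pos by (simp add: exp_minus exp_of_nat_mult power_one_over inverse_eq_divide)
  show ?thesis
    unfolding Fdelta_def I minus_add_distrib exp_add ex by (simp only: mult_ac)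
qed



lemma exp_dens_int1:
  assumes l: "0 < l" shows "(\<integral>s. exponential_density l s \<partial>lborel) = 1"
proof -
  interpret P: prob_space "density lborel (exponential_density l)"
    by (rule prob_space_exponential_density[OF l])
  have "(\<integral>s. (1::real) \<partial>density lborel (exponential_density l)) = 1"
    using P.prob_space by (simp only: lebesgue_integral_const) simp
  moreover have "(\<integral>s. (1::real) \<partial>density lborel (exponential_density l)) = (\<integral>s. exponential_density l s \<partial>lborel)"
    by (subst integral_density) (auto intro!: exponential_density_nonneg l)
  ultimately show ?thesis by simp
qed

lemma exp_laplace:
  assumes P: "prob_space M" and t: "t > 0" and lam: "lam \<ge> 0"
    and D: "distributed M lborel X (exponential_density (1 / (2 * t)))"
  shows "(\<integral>\<omega>. exp (- lam * X \<omega>) \<partial>M) = 1 / (1 + 2 * lam * t)"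
proof -
  define r where "r = 1 / (2 * t)"
  have r: "r > 0" using t by (simp add: r_def)
  have "(\<integral>\<omega>. exp (- lam * X \<omega>) \<partial>M) = (\<integral>s. exponential_density r s * exp (- lam * s) \<partial>lborel)"
    by (rule distributed_integral[OF D[folded r_def], symmetric]) (auto intro!: exponential_density_nonneg r)
  also have "\<dots> = (\<integral>s. (r / (r + lam)) * exponential_density (r + lam) s \<partial>lborel)"
  proof (rule Bochner_Integration.integral_cong[OF refl])
    fix s :: real
    show "exponential_density r s * exp (- lam * s) = (r / (r + lam)) * exponential_density (r + lam) s"
      using r lam by (simp add: exponential_density_def exp_add[symmetric] field_simps)
  qed
  also have "\<dots> = r / (r + lam)"
    using r lam by (simp add: exp_dens_int1)
  also have "\<dots> = 1 / (1 + 2 * lam * t)"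
    using t lam unfolding r_def by (simp add: field_simps)
  finally show ?thesis .
qed

lemma exp_nonneg:
  assumes P: "prob_space M" and t: "t > 0"
    and D: "distributed M lborel X (exponential_density (1 / (2 * t)))"
  shows "AE \<omega> in M. 0 \<le> X \<omega>"
proof -
  have Xm: "X \<in> measurable M lborel" using D by (rule distributed_measurable)
  have ae: "AE s in density lborel (exponential_density (1 / (2 * t))). 0 \<le> s"
    by (subst AE_density) (auto simp: exponential_density_def split: if_splits)
  have "AE s in distr M lborel X. 0 \<le> s"
    unfolding distributed_distr_eq_density[OF D] by (rule ae)
  then show ?thesis by (rule AE_distrD[OF Xm])
qed



theorem lemma3p4:
  fixes M :: "'a measure" and t x :: real and d :: "real \<Rightarrow> real"
    and f :: "nat \<Rightarrow> real \<Rightarrow> real"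
    and U :: "'a \<Rightarrow> nat" and Xs :: "'a \<Rightarrow> real" and X :: "nat \<Rightarrow> 'a \<Rightarrow> real"
  assumes "prob_space M"
    and "t > 0" and "x \<ge> 0" and "in_D d"
    and f: "\<And>n. is_inv_laplace (Fdelta t x (\<lambda>u. d u + 2 * real n)) (f n)"
    and U_rv: "U \<in> measurable M (count_space UNIV)"
    and U_poisson: "\<And>n. measure M {\<omega> \<in> space M. U \<omega> = n}
                         = exp (- (x / (2 * t))) * (x / (2 * t)) ^ n / fact n"
    and X_exp: "\<And>i. distributed M lborel (X i) (exponential_density (1 / (2 * t)))"
    and Xs_rv: "Xs \<in> borel_measurable M"
    and Xs_nonneg: "AE \<omega> in M. Xs \<omega> \<ge> 0"
    and Xs_laplace: "\<And>lam. lam \<ge> 0 \<Longrightarrow> (\<integral>\<omega>. exp (- lam * Xs \<omega>) \<partial>M) = Fdelta t x d lam"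
    and indep: "prob_space.indep_vars M (\<lambda>_. borel)
                  (\<lambda>i. case i of None \<Rightarrow> (\<lambda>\<omega>. real (U \<omega>))
                              | Some None \<Rightarrow> Xs
                              | Some (Some k) \<Rightarrow> X k) UNIV"
  shows "\<And>n B. B \<in> sets borel \<Longrightarrow>
           measure M {\<omega> \<in> space M. U \<omega> = n \<and> Xs \<omega> + (\<Sum>i<U \<omega>. X i \<omega>) \<in> B}
           = (\<integral>\<omega>. indicator B (Xs \<omega> + (\<Sum>i<U \<omega>. X i \<omega>))
                   * bcoef t x f (Xs \<omega> + (\<Sum>i<U \<omega>. X i \<omega>)) n \<partial>M)"
proof -
  interpret prob_space M by fact
  note t = \<open>t > 0\<close> and dD = \<open>in_D d\<close>
  define V where "V = (\<lambda>i. case i of None \<Rightarrow> (\<lambda>\<omega>. real (U \<omega>))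
                              | Some None \<Rightarrow> Xs
                              | Some (Some k) \<Rightarrow> X k)"
  have indV: "indep_vars (\<lambda>_. borel) V UNIV" using indep unfolding V_def .
  define a where "a = x / (2 * t)"
  define p where "p k = exp (- a) * a ^ k / fact k" for k
  have p_nn: "0 \<le> p k" for k using \<open>x \<ge> 0\<close> t by (simp add: p_def a_def)
  define Y where "Y k \<omega> = Xs \<omega> + (\<Sum>i<k. X i \<omega>)" for k \<omega>
  define Z where "Z \<omega> = Y (U \<omega>) \<omega>" for \<omega>
  have Xm[measurable]: "X i \<in> borel_measurable M" for i
    using distributed_measurable[OF X_exp[of i]] by simp
  note Xs_rv[measurable] U_rv[measurable]
  have Ym[measurable]: "Y k \<in> borel_measurable M" for k unfolding Y_def by measurable
  have Zm[measurable]: "Z \<in> borel_measurable M"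
    unfolding Z_def by (rule measurable_compose_countable[OF Ym U_rv])
  have fm[measurable]: "f k \<in> borel_measurable borel" for k
    using f[of k] unfolding is_inv_laplace_def by simp
  have f_nn: "0 \<le> f k s" for k s using f[of k] unfolding is_inv_laplace_def by simp
  have X_nn: "AE \<omega> in M. 0 \<le> X i \<omega>" for i
    by (rule exp_nonneg[OF \<open>prob_space M\<close> t X_exp])

  have lapY: "(\<integral>\<omega>. exp (- lam * Y k \<omega>) \<partial>M) = Fdelta t x d lam * (1 / (1 + 2 * lam * t)) ^ k"
    if lam: "lam \<ge> 0" for lam k
  proof -
    define J where "J = insert (Some None) ((\<lambda>j. Some (Some j)) ` {..<k})"
    define W where "W i \<omega> = exp (- lam * V i \<omega>)" for i \<omega>
    have fJ: "finite J" unfolding J_def by simp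
    have nJ: "Some None \<notin> (\<lambda>j. Some (Some j)) ` {..<k}" by auto
    have inj: "inj_on (\<lambda>j. Some (Some j)) {..<k}" by (auto simp: inj_on_def)
    have indW: "indep_vars (\<lambda>_. borel) W J"
      unfolding W_def
      by (rule indep_vars_compose2[OF indep_vars_subset[OF indV subset_UNIV]]) simp
    have Vnn: "AE \<omega> in M. 0 \<le> V i \<omega>" if "i \<in> J" for i
      using that unfolding J_def V_def by (auto intro: Xs_nonneg X_nn)
    have Vm: "V i \<in> borel_measurable M" if "i \<in> J" for i
      using that unfolding J_def V_def by auto
    have intW: "integrable M (W i)" if i: "i \<in> J" for i
    proof (rule integrable_const_bound[where B=1])
      show "AE \<omega> in M. norm (W i \<omega>) \<le> 1"
        using Vnn[OF i] by eventually_elim (use lam in \<open>auto simp: W_def intro!: mult_nonneg_nonneg\<close>)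
      show "W i \<in> borel_measurable M"
        unfolding W_def using Vm[OF i] by measurable
    qed
    have "(\<integral>\<omega>. exp (- lam * Y k \<omega>) \<partial>M) = (\<integral>\<omega>. (\<Prod>i\<in>J. W i \<omega>) \<partial>M)"
    proof (rule Bochner_Integration.integral_cong[OF refl])
      fix \<omega>
      have "(\<Prod>i\<in>J. W i \<omega>) = W (Some None) \<omega> * (\<Prod>j<k. W (Some (Some j)) \<omega>)"
        unfolding J_def by (simp add: prod.insert[OF _ nJ] prod.reindex[OF inj])
      also have "\<dots> = exp (- lam * Xs \<omega>) * exp (\<Sum>j<k. - lam * X j \<omega>)"
        by (simp add: W_def V_def exp_sum)
      also have "\<dots> = exp (- lam * Y k \<omega>)"
        by (simp add: Y_def exp_add[symmetric] algebra_simps sum_distrib_left sum_negf)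
      finally show "exp (- lam * Y k \<omega>) = (\<Prod>i\<in>J. W i \<omega>)" by simp
    qed
    also have "\<dots> = (\<Prod>i\<in>J. (\<integral>\<omega>. W i \<omega> \<partial>M))"
      by (rule indep_vars_lebesgue_integral[OF fJ indW intW])
    also have "\<dots> = (\<integral>\<omega>. W (Some None) \<omega> \<partial>M) * (\<Prod>j<k. (\<integral>\<omega>. W (Some (Some j)) \<omega> \<partial>M))"
      unfolding J_def by (simp add: prod.insert[OF _ nJ] prod.reindex[OF inj])
    also have "\<dots> = Fdelta t x d lam * (1 / (1 + 2 * lam * t)) ^ k"
      using Xs_laplace[OF lam] exp_laplace[OF \<open>prob_space M\<close> t lam X_exp]
      by (simp add: W_def V_def)
    finally show ?thesis .
  qed
  have distrY: "distr M borel (Y k) = density lborel (f k)" for k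
  proof (rule laplace_unique)
    show "prob_space (distr M borel (Y k))" by (rule prob_space_distr) simp
    show "sets (distr M borel (Y k)) = sets borel" by simp
    have "AE \<omega> in M. \<forall>i\<in>{..<k}. 0 \<le> X i \<omega>"
      by (rule AE_finite_allI) (auto intro: X_nn)
    then have "AE \<omega> in M. 0 \<le> Y k \<omega>"
      using Xs_nonneg by eventually_elim (auto simp: Y_def intro!: add_nonneg_nonneg sum_nonneg)
    then show "AE s in distr M borel (Y k). 0 \<le> s"
      by (subst AE_distr_iff) auto
    show "prob_space (density lborel (f k))" using f[of k] unfolding is_inv_laplace_def by simp
    show "sets (density lborel (f k)) = sets borel" by simp
    have fneg: "f k s = 0" if "s < 0" for s using f[of k] that unfolding is_inv_laplace_def by simp
    show "AE s in density lborel (f k). 0 \<le> s"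
    proof (subst AE_density)
      show "(\<lambda>x. ennreal (f k x)) \<in> borel_measurable lborel" by simp
      show "AE x in lborel. 0 < ennreal (f k x) \<longrightarrow> 0 \<le> x"
      proof (rule AE_I2, rule impI, rule ccontr)
        fix s assume "0 < ennreal (f k s)" "\<not> 0 \<le> s"
        then show False using fneg[of s] by simp
      qed
    qed
    fix n :: nat
    have "(\<integral>s. exp (- real n * s) \<partial>distr M borel (Y k)) = (\<integral>\<omega>. exp (- real n * Y k \<omega>) \<partial>M)"
      by (subst integral_distr) auto
    also have "\<dots> = Fdelta t x d (real n) * (1 / (1 + 2 * real n * t)) ^ k"
      by (rule lapY) simp
    also have "\<dots> = Fdelta t x (\<lambda>u. d u + 2 * real k) (real n)"
      by (rule Fdelta_shift[symmetric, OF t _ dD]) simp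
    also have "\<dots> = (\<integral>s. exp (- real n * s) \<partial>density lborel (f k))"
      using f[of k] unfolding is_inv_laplace_def by simp
    finally show "(\<integral>s. exp (- real n * s) \<partial>distr M borel (Y k)) = (\<integral>s. exp (- real n * s) \<partial>density lborel (f k))" .
  qed
  have indepA: "prob {\<omega> \<in> space M. U \<omega> = k \<and> Y k \<omega> \<in> C} = p k * prob {\<omega> \<in> space M. Y k \<omega> \<in> C}"
    if C: "C \<in> sets borel" for k C
  proof -
    define J where "J = insert (Some None) ((\<lambda>j. Some (Some j)) ` {..<k})"
    have iv: "indep_var borel ((\<lambda>g. g None) \<circ> (\<lambda>\<omega>. restrict (\<lambda>i. V i \<omega>) {None}))
                   borel ((\<lambda>g. g (Some None) + (\<Sum>j<k. g (Some (Some j)))) \<circ> (\<lambda>\<omega>. restrict (\<lambda>i. V i \<omega>) J))"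
      by (intro indep_var_compose[OF indep_var_restrict[OF indV]]) (auto simp: J_def)
    have e1: "(\<lambda>g. g None) \<circ> (\<lambda>\<omega>. restrict (\<lambda>i. V i \<omega>) {None}) = (\<lambda>\<omega>. real (U \<omega>))"
      by (auto simp: V_def)
    have e2: "(\<lambda>g. g (Some None) + (\<Sum>j<k. g (Some (Some j)))) \<circ> (\<lambda>\<omega>. restrict (\<lambda>i. V i \<omega>) J) = Y k"
      by (auto simp: V_def Y_def J_def fun_eq_iff)
    have iv2: "indep_var borel (\<lambda>\<omega>. real (U \<omega>)) borel (Y k)"
      using iv unfolding e1 e2 .
    have "\<P>(\<omega> in M. real (U \<omega>) \<in> {real k} \<and> Y k \<omega> \<in> C) = \<P>(\<omega> in M. real (U \<omega>) \<in> {real k}) * \<P>(\<omega> in M. Y k \<omega> \<in> C)"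
      by (rule prob_indep_random_variable[OF iv2]) (auto simp: C)
    then show ?thesis
      using U_poisson[of k] by (simp add: p_def a_def)
  qed
  have PD: "prob_space (density lborel (f k))" for k
    using f[of k] unfolding is_inv_laplace_def by simp
  have mY: "prob {\<omega> \<in> space M. Y k \<omega> \<in> C} = measure (density lborel (f k)) C"
    if C: "C \<in> sets borel" for k C
  proof -
    have "prob {\<omega> \<in> space M. Y k \<omega> \<in> C} = measure (distr M borel (Y k)) C"
      using C by (subst measure_distr) (auto intro!: arg_cong[where f=prob])
    then show ?thesis unfolding distrY .
  qed
  define h where "h y = (\<Sum>k. ennreal (p k * f k y))" for y
  have hm[measurable]: "h \<in> borel_measurable borel" unfolding h_def by measurable
  have distrZ: "distr M borel Z = density lborel h"
  proof (rule measure_eqI)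
    show "sets (distr M borel Z) = sets (density lborel h)" by simp
    fix C assume "C \<in> sets (distr M borel Z)"
    then have C[measurable]: "C \<in> sets borel" by simp
    define A where "A k = {\<omega> \<in> space M. U \<omega> = k \<and> Y k \<omega> \<in> C}" for k
    have Am: "range A \<subseteq> events" unfolding A_def by auto
    have Ad: "disjoint_family A" unfolding A_def disjoint_family_on_def by auto
    have "emeasure (distr M borel Z) C = emeasure M (Z -` C \<inter> space M)"
      by (rule emeasure_distr) auto
    also have "Z -` C \<inter> space M = (\<Union>k. A k)"
      unfolding A_def Z_def by auto
    also have "emeasure M (\<Union>k. A k) = (\<Sum>k. emeasure M (A k))"
      by (rule suminf_emeasure[OF Am Ad, symmetric])
    also have "\<dots> = (\<Sum>k. ennreal (p k) * emeasure (density lborel (f k)) C)"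
    proof (rule suminf_cong)
      fix k
      interpret PDk: prob_space "density lborel (f k)" by (rule PD)
      have "emeasure M (A k) = ennreal (prob (A k))" by (rule emeasure_eq_measure)
      also have "prob (A k) = p k * measure (density lborel (f k)) C"
        unfolding A_def indepA[OF C] mY[OF C] ..
      also have "ennreal \<dots> = ennreal (p k) * ennreal (measure (density lborel (f k)) C)"
        by (rule ennreal_mult) (auto simp: p_nn)
      also have "ennreal (measure (density lborel (f k)) C) = emeasure (density lborel (f k)) C"
        by (rule PDk.emeasure_eq_measure[symmetric])
      finally show "emeasure M (A k) = ennreal (p k) * emeasure (density lborel (f k)) C" .
    qed
    also have "\<dots> = emeasure (density lborel h) C"
    proof -
      have "emeasure (density lborel h) C = (\<integral>\<^sup>+ y. h y * indicator C y \<partial>lborel)"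
        by (rule emeasure_density) auto
      also have "\<dots> = (\<integral>\<^sup>+ y. (\<Sum>k. ennreal (p k) * (ennreal (f k y) * indicator C y)) \<partial>lborel)"
        unfolding h_def ennreal_suminf_multc[symmetric]
        by (rule nn_integral_cong) (simp add: ennreal_mult p_nn f_nn mult.assoc)
      also have "\<dots> = (\<Sum>k. (\<integral>\<^sup>+ y. ennreal (p k) * (ennreal (f k y) * indicator C y) \<partial>lborel))"
        by (rule nn_integral_suminf) auto
      also have "\<dots> = (\<Sum>k. ennreal (p k) * emeasure (density lborel (f k)) C)"
        by (rule suminf_cong) (simp add: nn_integral_cmult emeasure_density)
      finally show ?thesis by simp
    qed
    finally show "emeasure (distr M borel Z) C = emeasure (density lborel h) C" .
  qed
  have "emeasure (density lborel h) (space (density lborel h)) = 1"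
    unfolding distrZ[symmetric] by (rule prob_space.emeasure_space_1[OF prob_space_distr]) simp
  then have "(\<integral>\<^sup>+ y. h y \<partial>lborel) = 1"
    by (subst (asm) emeasure_density) auto
  then have hfin: "AE y in lborel. h y \<noteq> \<infinity>"
    by (intro nn_integral_PInf_AE) auto
  show "\<And>n B. B \<in> sets borel \<Longrightarrow>
           measure M {\<omega> \<in> space M. U \<omega> = n \<and> Xs \<omega> + (\<Sum>i<U \<omega>. X i \<omega>) \<in> B}
           = (\<integral>\<omega>. indicator B (Xs \<omega> + (\<Sum>i<U \<omega>. X i \<omega>))
                   * bcoef t x f (Xs \<omega> + (\<Sum>i<U \<omega>. X i \<omega>)) n \<partial>M)"
  proof -
    fix n :: nat and B :: "real set" assume B[measurable]: "B \<in> sets borel"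
    have Zeq: "Xs \<omega> + (\<Sum>i<U \<omega>. X i \<omega>) = Z \<omega>" for \<omega> by (simp add: Z_def Y_def)
    show "measure M {\<omega> \<in> space M. U \<omega> = n \<and> Xs \<omega> + (\<Sum>i<U \<omega>. X i \<omega>) \<in> B}
           = (\<integral>\<omega>. indicator B (Xs \<omega> + (\<Sum>i<U \<omega>. X i \<omega>))
                   * bcoef t x f (Xs \<omega> + (\<Sum>i<U \<omega>. X i \<omega>)) n \<partial>M)"
    proof -
      interpret PDn: prob_space "density lborel (f n)" by (rule PD)
      define g where "g y = indicator B y * bcoef t x f y n" for y
      have gm[measurable]: "g \<in> borel_measurable borel" unfolding g_def bcoef_def by measurable
      have good: "0 \<le> g y \<and> g y \<le> 1 \<and> h y * ennreal (g y) = ennreal (p n) * (ennreal (f n y) * indicator B y)"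
        if hy: "h y \<noteq> \<infinity>" for y
      proof -
        define q where "q k = p k * f k y" for k
        have q_nn: "0 \<le> q k" for k unfolding q_def using p_nn f_nn by simp
        have sq: "summable q"
          by (rule summable_suminf_not_top[OF q_nn]) (use hy in \<open>simp add: h_def q_def\<close>)
        define P where "P = suminf q"
        have hP: "h y = ennreal P"
          unfolding h_def P_def q_def[symmetric] by (rule suminf_ennreal2[OF q_nn sq])
        have P_nn: "0 \<le> P" unfolding P_def by (rule suminf_nonneg[OF sq q_nn])
        have qle: "q n \<le> P" unfolding P_def using sum_le_suminf[OF sq, of "{n}"] q_nn by simp
        have fe: "(\<lambda>k. a ^ k / fact k * f k y) = (\<lambda>k. exp a * q k)"
          by (auto simp: fun_eq_iff q_def p_def exp_minus field_simps)
        have S: "(\<Sum>k. a ^ k / fact k * f k y) = exp a * P"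
          unfolding fe P_def by (rule suminf_mult[OF sq])
        have bc: "bcoef t x f y n = q n / P"
        proof -
          have "bcoef t x f y n = (exp a * q n) / (exp a * P)"
            unfolding bcoef_def a_def[symmetric] S using fe by (metis)
          then show ?thesis by simp
        qed
        show ?thesis
        proof (cases "P = 0")
          case True
          then have "q n = 0" using qle q_nn[of n] by simp
          then have "p n * f n y = 0" by (simp add: q_def)
          then have "ennreal (p n) * (ennreal (f n y) * indicator B y) = 0"
            using p_nn f_nn by (auto simp: ennreal_mult'[symmetric] ennreal_mult[symmetric] mult.assoc[symmetric])
          then show ?thesis using True by (simp add: g_def bc hP)
        next
          case False
          then have Pp: "P > 0" using P_nn by simp
          have g: "g y = indicator B y * (q n / P)" by (simp add: g_def bc)
          have "g y \<le> 1" unfolding g using qle Pp by (auto simp: indicator_def)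
          moreover have "0 \<le> g y" unfolding g using q_nn[of n] Pp by (auto simp: indicator_def)
          moreover have "h y * ennreal (g y) = ennreal (p n) * (ennreal (f n y) * indicator B y)"
          proof -
            have "h y * ennreal (g y) = ennreal (P * g y)"
              unfolding hP using P_nn \<open>0 \<le> g y\<close> by (simp add: ennreal_mult)
            also have "P * g y = p n * (f n y * indicator B y)"
              unfolding g q_def using Pp by (simp add: field_simps)
            also have "ennreal \<dots> = ennreal (p n) * (ennreal (f n y) * indicator B y)"
              using p_nn f_nn by (simp add: ennreal_mult ennreal_indicator)
            finally show ?thesis .
          qed
          ultimately show ?thesis by blast
        qed
      qed
      have "AE y in density lborel h. h y \<noteq> \<infinity>"
        using hfin by (subst AE_density) (auto elim: eventually_mono)
      then have "AE y in distr M borel Z. h y \<noteq> \<infinity>" unfolding distrZ .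
      then have AEZ: "AE \<omega> in M. h (Z \<omega>) \<noteq> \<infinity>" by (rule AE_distrD[OF Zm])
      have intg: "integrable M (\<lambda>\<omega>. g (Z \<omega>))"
      proof (rule integrable_const_bound[where B=1])
        show "AE \<omega> in M. norm (g (Z \<omega>)) \<le> 1"
          using AEZ by eventually_elim (use good in auto)
      qed simp
      have "(\<integral>\<omega>. g (Z \<omega>) \<partial>M) = enn2real (\<integral>\<^sup>+ \<omega>. ennreal (g (Z \<omega>)) \<partial>M)"
        by (rule integral_eq_nn_integral) (auto intro: AE_mp[OF AEZ] simp: good)
      also have "(\<integral>\<^sup>+ \<omega>. ennreal (g (Z \<omega>)) \<partial>M) = (\<integral>\<^sup>+ y. ennreal (g y) \<partial>distr M borel Z)"
        by (rule nn_integral_distr[symmetric]) auto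
      also have "\<dots> = (\<integral>\<^sup>+ y. h y * ennreal (g y) \<partial>lborel)"
        unfolding distrZ by (rule nn_integral_density) auto
      also have "\<dots> = (\<integral>\<^sup>+ y. ennreal (p n) * (ennreal (f n y) * indicator B y) \<partial>lborel)"
        by (rule nn_integral_cong_AE) (use hfin in \<open>auto elim: eventually_mono simp: good\<close>)
      also have "\<dots> = ennreal (p n) * emeasure (density lborel (f n)) B"
        by (simp add: nn_integral_cmult emeasure_density)
      also have "\<dots> = ennreal (p n * measure (density lborel (f n)) B)"
        by (simp add: PDn.emeasure_eq_measure ennreal_mult p_nn)
      finally have R: "(\<integral>\<omega>. g (Z \<omega>) \<partial>M) = p n * measure (density lborel (f n)) B"
        using p_nn by simp
      have "{\<omega> \<in> space M. U \<omega> = n \<and> Z \<omega> \<in> B} = {\<omega> \<in> space M. U \<omega> = n \<and> Y n \<omega> \<in> B}"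
        by (auto simp: Z_def)
      then have L: "prob {\<omega> \<in> space M. U \<omega> = n \<and> Z \<omega> \<in> B} = p n * measure (density lborel (f n)) B"
        using indepA[OF B] mY[OF B] by simp
      show ?thesis unfolding Zeq using L R by (simp add: g_def)
    qed
  qed
qed


end
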